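(* Let $0\le\alpha\le\beta\le\pi/2$, $P_1,P_2>0$, and define $\phi$ and $\mathcal R(\theta)$ as in the context. Then $$\max\Big\{R_1+R_2:(R_1,R_2)\in\bigcup_{\theta\in[\alpha,\beta]}\mathcal R(\theta)\Big\}=\mathcal C\big(\phi(\theta^* )\big),$$ where, with $T=\frac{P_1\sin2\alpha+P_2\sin2\beta}{P_1\cos2\alpha+P_2\cos2\beta}$ (assuming $P_1\cos2\alpha+P_2\cos2\beta\neq0$), $\theta^*=\frac12\arctan T$ if $T\ge0$ and $\theta^*=\frac12(\pi+\arctan T)$ if $T\le0$.
   Context: $\mathcal C(x)=\frac12\log_2(1+x)$, $\phi_1(\theta)=P_1\cos^2(\theta-\alpha)$, $\phi_2(\theta)=P_2\cos^2(\theta-\beta)$, $\phi=\phi_1+\phi_2$, and $\mathcal R(\theta)=\{(R_1,R_2)\ge0:R_1\le\mathcal C(\phi_1(\theta)),R_2\le\mathcal C(\phi_2(\theta)),R_1+R_2\le\mathcal C(\phi(\theta))\}$. (In the two-hop MAC, $P_i=\|\mathbf h_{0i}\|^2P_{S_i}$, $\alpha,\beta$ are the angles of the normalized source-to-relay channel vectors in an orthonormal basis of their span, and $\bigcup_{\theta\in[\alpha,\beta]}\mathcal R(\theta)$ is the first outer bound.) *)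

theory Defs
  imports Complex_Main
begin

definition cap :: "real \<Rightarrow> real" where
  "cap x = 1/2 * log 2 (1 + x)"

definition phi1 :: "real \<Rightarrow> real \<Rightarrow> real \<Rightarrow> real" where
  "phi1 P1 \<alpha> \<theta> = P1 * (cos (\<theta> - \<alpha>))\<^sup>2"

definition phi2 :: "real \<Rightarrow> real \<Rightarrow> real \<Rightarrow> real" where
  "phi2 P2 \<beta> \<theta> = P2 * (cos (\<theta> - \<beta>))\<^sup>2"

definition phi :: "real \<Rightarrow> real \<Rightarrow> real \<Rightarrow> real \<Rightarrow> real \<Rightarrow> real" where
  "phi P1 P2 \<alpha> \<beta> \<theta> = phi1 P1 \<alpha> \<theta> + phi2 P2 \<beta> \<theta>"

definition rate_region :: "real \<Rightarrow> real \<Rightarrow> real \<Rightarrow> real \<Rightarrow> real \<Rightarrow> (real \<times> real) set" where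
  "rate_region P1 P2 \<alpha> \<beta> \<theta> =
     {(R1, R2). R1 \<ge> 0 \<and> R2 \<ge> 0 \<and>
        R1 \<le> cap (phi1 P1 \<alpha> \<theta>) \<and> R2 \<le> cap (phi2 P2 \<beta> \<theta>) \<and>
        R1 + R2 \<le> cap (phi P1 P2 \<alpha> \<beta> \<theta>)}"

end

theory Submission imports Defs begin

lemma cap_mono: "0 \<le> x \<Longrightarrow> x \<le> y \<Longrightarrow> cap x \<le> cap y"
  unfolding cap_def by simp

lemma cap_nonneg: "0 \<le> x \<Longrightarrow> 0 \<le> cap x"
  unfolding cap_def by simp

lemma cap_subadd: "0 \<le> x \<Longrightarrow> 0 \<le> y \<Longrightarrow> cap (x + y) \<le> cap x + cap y"
proof -
  assume h: "0 \<le> x" "0 \<le> y"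
  have "log 2 (1 + (x + y)) \<le> log 2 ((1 + x) * (1 + y))"
    using h by (intro log_le_cancel_iff[THEN iffD2]) (auto simp: algebra_simps add_pos_nonneg)
  also have "\<dots> = log 2 (1 + x) + log 2 (1 + y)"
    using h by (simp add: log_mult)
  finally show ?thesis unfolding cap_def by simp
qed

lemma sqrt_ratio:
  fixes A B :: real assumes "A \<noteq> 0"
  shows "sqrt (1 + (B/A)\<^sup>2) = sqrt (A\<^sup>2 + B\<^sup>2) / \<bar>A\<bar>"
proof -
  have "1 + (B/A)\<^sup>2 = (A\<^sup>2 + B\<^sup>2) / A\<^sup>2" using assms by (simp add: field_simps power2_eq_square)
  then show ?thesis by (simp add: real_sqrt_divide)
qed

lemma angle:
  fixes A B :: real
  assumes A: "A \<noteq> 0" and B: "B \<ge> 0"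
  defines "\<psi> \<equiv> (if A > 0 then arctan (B/A) else pi + arctan (B/A))"
  shows "cos \<psi> = A / sqrt (A\<^sup>2 + B\<^sup>2)" "sin \<psi> = B / sqrt (A\<^sup>2 + B\<^sup>2)" "0 \<le> \<psi>" "\<psi> \<le> pi"
proof -
  have R: "sqrt (A\<^sup>2 + B\<^sup>2) > 0" using A by (simp add: add_pos_nonneg)
  have ca: "cos (arctan (B/A)) = \<bar>A\<bar> / sqrt (A\<^sup>2 + B\<^sup>2)"
    unfolding cos_arctan sqrt_ratio[OF A] by simp
  have sa: "sin (arctan (B/A)) = (B/A) * \<bar>A\<bar> / sqrt (A\<^sup>2 + B\<^sup>2)"
    unfolding sin_arctan sqrt_ratio[OF A] by simp
  show "cos \<psi> = A / sqrt (A\<^sup>2 + B\<^sup>2)" "sin \<psi> = B / sqrt (A\<^sup>2 + B\<^sup>2)"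
    using A R unfolding \<psi>_def by (auto simp: ca sa abs_if field_simps)
  have "0 \<le> \<psi> \<and> \<psi> \<le> pi"
  proof (cases "A > 0")
    case True
    then have "B / A \<ge> 0" using B by simp
    then have "0 \<le> arctan (B/A)" using arctan_monotone'[of 0 "B/A"] by simp
    moreover have "arctan (B/A) < pi/2" by (rule arctan_ubound)
    moreover have "\<psi> = arctan (B/A)" using True by (simp add: \<psi>_def)
    ultimately have "0 \<le> \<psi> \<and> \<psi> \<le> pi" using pi_gt_zero by linarith
    then show ?thesis by auto
  next
    case False
    then have "A < 0" using A by simp
    then have "B / A \<le> 0" using B by (simp add: divide_nonneg_neg)
    then have "arctan (B/A) \<le> 0" using arctan_monotone'[of "B/A" 0] by simp
    moreover have "arctan (B/A) > - (pi/2)" by (rule arctan_lbound)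
    moreover have "\<psi> = pi + arctan (B/A)" using False by (simp add: \<psi>_def)
    ultimately have "0 \<le> \<psi> \<and> \<psi> \<le> pi" using pi_gt_zero by linarith
    then show ?thesis by auto
  qed
  then show "0 \<le> \<psi>" "\<psi> \<le> pi" by auto
qed

lemma phi_expand:
  "phi P1 P2 a b t = (P1 + P2)/2 + ((P1 * cos (2*a) + P2 * cos (2*b)) * cos (2*t)
      + (P1 * sin (2*a) + P2 * sin (2*b)) * sin (2*t)) / 2"
proof -
  have c: "(cos x)\<^sup>2 = (1 + cos (2*x))/2" for x :: real using cos_double_cos[of x] by simp
  show ?thesis unfolding phi_def phi1_def phi2_def c
    by (simp add: right_diff_distrib cos_diff field_simps)
qed

lemma cs_bound:
  fixes A B c s :: real assumes "c\<^sup>2 + s\<^sup>2 = 1"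
  shows "A * c + B * s \<le> sqrt (A\<^sup>2 + B\<^sup>2)"
proof (rule real_le_rsqrt)
  have "(A*c + B*s)\<^sup>2 + (A*s - B*c)\<^sup>2 = (A\<^sup>2 + B\<^sup>2) * (c\<^sup>2 + s\<^sup>2)" by algebra
  then have "(A*c + B*s)\<^sup>2 + (A*s - B*c)\<^sup>2 = A\<^sup>2 + B\<^sup>2" using assms by simp
  moreover have "(A*s - B*c)\<^sup>2 \<ge> 0" by simp
  ultimately show "(A*c + B*s)\<^sup>2 \<le> A\<^sup>2 + B\<^sup>2" by linarith
qed


lemma sin_nonneg_interval:
  fixes x :: real assumes "-pi \<le> x" "x \<le> pi" "sin x \<ge> 0" "x \<noteq> -pi"
  shows "0 \<le> x"
proof (rule ccontr)
  assume "\<not> 0 \<le> x"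
  then have "0 < -x" "-x < pi" using assms by auto
  then have "sin (-x) > 0" by (rule sin_gt_zero)
  then show False using assms by simp
qed

theorem lemma5:
  fixes \<alpha> \<beta> P1 P2 :: real
  assumes "0 \<le> \<alpha>" "\<alpha> \<le> \<beta>" "\<beta> \<le> pi / 2" "P1 > 0" "P2 > 0"
    and "P1 * cos (2 * \<alpha>) + P2 * cos (2 * \<beta>) \<noteq> 0"
  defines "T \<equiv> (P1 * sin (2 * \<alpha>) + P2 * sin (2 * \<beta>)) / (P1 * cos (2 * \<alpha>) + P2 * cos (2 * \<beta>))"
  defines "S \<equiv> {R1 + R2 | R1 R2. (R1, R2) \<in> (\<Union>\<theta>\<in>{\<alpha>..\<beta>}. rate_region P1 P2 \<alpha> \<beta> \<theta>)}"
  shows "\<exists>\<theta>s. ((T \<ge> 0 \<and> \<theta>s = arctan T / 2) \<or> (T \<le> 0 \<and> \<theta>s = (pi + arctan T) / 2)) \<and>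
              cap (phi P1 P2 \<alpha> \<beta> \<theta>s) \<in> S \<and> (\<forall>s\<in>S. s \<le> cap (phi P1 P2 \<alpha> \<beta> \<theta>s))"
proof -
  define u where "u = 2 * \<alpha>"
  define v where "v = 2 * \<beta>"
  define A where "A = P1 * cos u + P2 * cos v"
  define B where "B = P1 * sin u + P2 * sin v"
  define R where "R = sqrt (A\<^sup>2 + B\<^sup>2)"
  define \<psi> where "\<psi> = (if A > 0 then arctan (B/A) else pi + arctan (B/A))"
  define \<theta>s where "\<theta>s = \<psi> / 2"
  have A0: "A \<noteq> 0" using assms(6) by (simp add: A_def u_def v_def)
  have T: "T = B / A" by (simp add: T_def A_def B_def u_def v_def)
  have u0: "0 \<le> u" and uv: "u \<le> v" and vpi: "v \<le> pi" using assms(1-3) by (auto simp: u_def v_def)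
  have "sin u \<ge> 0" "sin v \<ge> 0" using u0 uv vpi by (auto intro!: sin_ge_zero)
  then have B0: "B \<ge> 0" using assms(4,5) by (simp add: B_def)
  have Rpos: "R > 0" using A0 by (simp add: R_def add_pos_nonneg)
  have R2: "R\<^sup>2 = A\<^sup>2 + B\<^sup>2" by (simp add: R_def)
  note ang = angle[OF A0 B0, folded \<psi>_def R_def]
  have svu: "sin (v - u) \<ge> 0" using uv u0 vpi by (intro sin_ge_zero) auto
  have e1: "B * cos u - A * sin u = P2 * sin (v - u)"
    by (simp add: A_def B_def sin_diff algebra_simps)
  have e2: "A * sin v - B * cos v = P1 * sin (v - u)"
    by (simp add: A_def B_def sin_diff algebra_simps)
  have s1: "sin (\<psi> - u) = P2 * sin (v - u) / R"
  proof -
    have "sin (\<psi> - u) = (B * cos u - A * sin u) / R"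
      by (simp add: sin_diff ang(1,2) diff_divide_distrib)
    then show ?thesis using e1 by simp
  qed
  have s2: "sin (v - \<psi>) = P1 * sin (v - u) / R"
  proof -
    have "sin (v - \<psi>) = (sin v * A - cos v * B) / R"
      by (simp add: sin_diff ang(1,2) diff_divide_distrib)
    then show ?thesis using e2 by (simp add: mult.commute)
  qed
  have "u \<le> \<psi>"
  proof -
    have "\<psi> - u \<noteq> -pi"
    proof
      assume h: "\<psi> - u = -pi"
      then have "\<psi> = 0" "u = pi" using ang(3) vpi uv by auto
      then have "v = pi" using uv vpi by auto
      then have "A < 0" using \<open>u = pi\<close> assms(4,5) by (simp add: A_def)
      moreover have "cos \<psi> = 1" using \<open>\<psi> = 0\<close> by simp
      ultimately show False using ang(1) Rpos by (simp add: divide_less_0_iff)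
    qed
    moreover have "sin (\<psi> - u) \<ge> 0" using s1 svu assms(5) Rpos by simp
    ultimately have "0 \<le> \<psi> - u"
      using sin_nonneg_interval[of "\<psi> - u"] ang(3,4) u0 uv vpi by linarith
    then show ?thesis by simp
  qed
  have "\<psi> \<le> v"
  proof -
    have "v - \<psi> \<noteq> -pi"
    proof
      assume h: "v - \<psi> = -pi"
      then have "\<psi> = pi" "v = 0" using ang(4) u0 uv by auto
      then have "u = 0" using uv u0 by auto
      then have "A > 0" using \<open>v = 0\<close> assms(4,5) by (simp add: A_def)
      moreover have "cos \<psi> = -1" using \<open>\<psi> = pi\<close> by simp
      ultimately show False using ang(1) Rpos
        using divide_pos_pos[of A R] by linarith
    qed
    moreover have "sin (v - \<psi>) \<ge> 0" using s2 svu assms(4) Rpos by simp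
    ultimately have "0 \<le> v - \<psi>"
      using sin_nonneg_interval[of "v - \<psi>"] ang(3,4) u0 uv vpi by linarith
    then show ?thesis by simp
  qed
  then have th_in: "\<theta>s \<in> {\<alpha>..\<beta>}" using \<open>u \<le> \<psi>\<close> by (simp add: \<theta>s_def u_def v_def)
  have phiE: "phi P1 P2 \<alpha> \<beta> t = (P1 + P2)/2 + (A * cos (2*t) + B * sin (2*t)) / 2" for t
    unfolding phi_expand A_def B_def u_def v_def by simp
  have phimax: "phi P1 P2 \<alpha> \<beta> t \<le> phi P1 P2 \<alpha> \<beta> \<theta>s" for t
  proof -
    have "A * cos (2*t) + B * sin (2*t) \<le> R"
      unfolding R_def by (rule cs_bound) (simp add: sin_cos_squared_add2)
    moreover have "A * cos (2*\<theta>s) + B * sin (2*\<theta>s) = R"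
    proof -
      have "A * cos (2*\<theta>s) + B * sin (2*\<theta>s) = (A\<^sup>2 + B\<^sup>2) / R"
        using ang(1,2) by (simp add: \<theta>s_def power2_eq_square add_divide_distrib)
      also have "\<dots> = R\<^sup>2 / R" using R2 by simp
      also have "\<dots> = R" using Rpos by (simp add: power2_eq_square)
      finally show ?thesis .
    qed
    ultimately show ?thesis unfolding phiE by simp
  qed
  have phi1_nn: "phi1 P1 \<alpha> t \<ge> 0" for t using assms(4) by (simp add: phi1_def)
  have phi2_nn: "phi2 P2 \<beta> t \<ge> 0" for t using assms(5) by (simp add: phi2_def)
  have phi_nn: "phi P1 P2 \<alpha> \<beta> t \<ge> 0" for t using phi1_nn phi2_nn by (simp add: phi_def)
  have mem: "cap (phi P1 P2 \<alpha> \<beta> \<theta>s) \<in> S"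
  proof -
    define R1 where "R1 = cap (phi1 P1 \<alpha> \<theta>s)"
    define R2 where "R2 = cap (phi P1 P2 \<alpha> \<beta> \<theta>s) - R1"
    have "(R1, R2) \<in> rate_region P1 P2 \<alpha> \<beta> \<theta>s"
      unfolding rate_region_def
    proof (clarsimp, intro conjI)
      show "0 \<le> R1" unfolding R1_def by (rule cap_nonneg[OF phi1_nn])
      show "0 \<le> R2" unfolding R2_def R1_def
        using cap_mono[OF phi1_nn[of \<theta>s], of "phi P1 P2 \<alpha> \<beta> \<theta>s"] phi2_nn[of \<theta>s]
        by (simp add: phi_def)
      show "R1 \<le> cap (phi1 P1 \<alpha> \<theta>s)" by (simp add: R1_def)
      show "R2 \<le> cap (phi2 P2 \<beta> \<theta>s)" unfolding R2_def R1_def phi_def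
        using cap_subadd[OF phi1_nn[of \<theta>s] phi2_nn[of \<theta>s]] by simp
      show "R1 + R2 \<le> cap (phi P1 P2 \<alpha> \<beta> \<theta>s)" by (simp add: R2_def)
    qed
    moreover have "cap (phi P1 P2 \<alpha> \<beta> \<theta>s) = R1 + R2" by (simp add: R2_def)
    ultimately show ?thesis unfolding S_def using th_in by blast
  qed
  have ub: "\<forall>s\<in>S. s \<le> cap (phi P1 P2 \<alpha> \<beta> \<theta>s)"
  proof
    fix s assume "s \<in> S"
    then obtain R1 R2 \<theta> where s: "s = R1 + R2" and "(R1, R2) \<in> rate_region P1 P2 \<alpha> \<beta> \<theta>"
      unfolding S_def by blast
    then have "s \<le> cap (phi P1 P2 \<alpha> \<beta> \<theta>)" unfolding rate_region_def by simp
    also have "\<dots> \<le> cap (phi P1 P2 \<alpha> \<beta> \<theta>s)" by (rule cap_mono[OF phi_nn phimax])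
    finally show "s \<le> cap (phi P1 P2 \<alpha> \<beta> \<theta>s)" .
  qed
  have disj: "(T \<ge> 0 \<and> \<theta>s = arctan T / 2) \<or> (T \<le> 0 \<and> \<theta>s = (pi + arctan T) / 2)"
  proof (cases "A > 0")
    case True
    then show ?thesis using B0 by (simp add: T \<theta>s_def \<psi>_def)
  next
    case False
    then have "A < 0" using A0 by simp
    then show ?thesis using B0 False by (simp add: T \<theta>s_def \<psi>_def divide_nonneg_neg)
  qed
  show ?thesis using disj mem ub by blast
qed

end
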